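(* Let $M\ge2$ and let $\mathcal{P}$ be a convex Class I source set on $\{1,\dots,M\}$ (so $\mathcal{P}$ contains the uniform distribution). Then for $D\in[0,1]$, \[ \epsilon^*_{\mathrm{IT}}(\mathcal{P},D)=\begin{cases}\log M-H(D)-D\log(M-1), & D<\frac{M-1}{M},\\ 0, & D\ge\frac{M-1}{M},\end{cases} \] where $H(D)=-D\log D-(1-D)\log(1-D)$ is the binary entropy function.
   Context: A source set is a nonempty set $\mathcal{P}$ of probability distributions on $\{1,\dots,M\}$; it is Class I if its convex hull contains the uniform distribution $(1/M,\dots,1/M)$. A mechanism is an $M\times M$ row-stochastic matrix $Q$ with entries $Q(j|i)$; its diagonal distortions are $D_i=1-Q(i|i)$. $Q$ is $(\mathcal{P},D)$-valid if $\sum_iP_iD_i\le D$ for all $P\in\mathcal{P}$ (average Hamming distortion); $\mathcal{Q}(\mathcal{P},D)$ is the set of these. For a source distribution $P$ and mechanism $Q$, $I(P;Q)$ is the mutual information $I(X;\hat X)$ when $X\sim P$ and $\hat X$ is drawn from $Q(\cdot|X)$. The worst-case information-theoretic leakage is $\epsilon_{\mathrm{IT}}(Q)=\max_{P\in\mathcal{P}}I(P;Q)$ and $\epsilon^*_{\mathrm{IT}}(\mathcal{P},D)=\min_{Q\in\mathcal{Q}(\mathcal{P},D)}\epsilon_{\mathrm{IT}}(Q)$. *)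

theory Defs
  imports Complex_Main
begin

text \<open>Alphabet {1..M}. Distributions and mechanisms are real-valued functions on nat,
  only their values on {1..M} are relevant (distributions are required to vanish outside).\<close>

definition is_dist :: "nat \<Rightarrow> (nat \<Rightarrow> real) \<Rightarrow> bool" where
  "is_dist M P \<longleftrightarrow> (\<forall>i\<in>{1..M}. 0 \<le> P i) \<and> (\<forall>i. i \<notin> {1..M} \<longrightarrow> P i = 0)
      \<and> (\<Sum>i=1..M. P i) = 1"

definition uniform_dist :: "nat \<Rightarrow> nat \<Rightarrow> real" where
  "uniform_dist M = (\<lambda>i. if i \<in> {1..M} then 1 / real M else 0)"

definition source_set :: "nat \<Rightarrow> (nat \<Rightarrow> real) set \<Rightarrow> bool" where
  "source_set M \<P> \<longleftrightarrow> \<P> \<noteq> {} \<and> (\<forall>P\<in>\<P>. is_dist M P)"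

definition convex_fset :: "(nat \<Rightarrow> real) set \<Rightarrow> bool" where
  "convex_fset S \<longleftrightarrow> (\<forall>P\<in>S. \<forall>P'\<in>S. \<forall>t::real. 0 \<le> t \<and> t \<le> 1 \<longrightarrow>
      (\<lambda>i. t * P i + (1 - t) * P' i) \<in> S)"

definition in_convex_hull :: "(nat \<Rightarrow> real) \<Rightarrow> (nat \<Rightarrow> real) set \<Rightarrow> bool" where
  "in_convex_hull x S \<longleftrightarrow> (\<exists>n::nat. \<exists>w::nat \<Rightarrow> real. \<exists>v::nat \<Rightarrow> (nat \<Rightarrow> real).
      (\<forall>k<n. 0 \<le> w k \<and> v k \<in> S) \<and> (\<Sum>k<n. w k) = 1 \<and> x = (\<lambda>i. \<Sum>k<n. w k * v k i))"

definition class_I :: "nat \<Rightarrow> (nat \<Rightarrow> real) set \<Rightarrow> bool" where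
  "class_I M \<P> \<longleftrightarrow> in_convex_hull (uniform_dist M) \<P>"

text \<open>Mechanism: Q i j = Q(j|i), row-stochastic on {1..M}.\<close>
definition mechanism :: "nat \<Rightarrow> (nat \<Rightarrow> nat \<Rightarrow> real) \<Rightarrow> bool" where
  "mechanism M Q \<longleftrightarrow> (\<forall>i\<in>{1..M}. (\<forall>j\<in>{1..M}. 0 \<le> Q i j) \<and> (\<Sum>j=1..M. Q i j) = 1)"

definition diag_dist :: "(nat \<Rightarrow> nat \<Rightarrow> real) \<Rightarrow> nat \<Rightarrow> real" where
  "diag_dist Q i = 1 - Q i i"

definition valid_mech :: "nat \<Rightarrow> (nat \<Rightarrow> real) set \<Rightarrow> real \<Rightarrow> (nat \<Rightarrow> nat \<Rightarrow> real) \<Rightarrow> bool" where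
  "valid_mech M \<P> D Q \<longleftrightarrow> mechanism M Q \<and> (\<forall>P\<in>\<P>. (\<Sum>i=1..M. P i * diag_dist Q i) \<le> D)"

definition valid_set :: "nat \<Rightarrow> (nat \<Rightarrow> real) set \<Rightarrow> real \<Rightarrow> (nat \<Rightarrow> nat \<Rightarrow> real) set" where
  "valid_set M \<P> D = {Q. valid_mech M \<P> D Q}"

definition mutual_info :: "nat \<Rightarrow> (nat \<Rightarrow> real) \<Rightarrow> (nat \<Rightarrow> nat \<Rightarrow> real) \<Rightarrow> real" where
  "mutual_info M P Q = (\<Sum>i=1..M. \<Sum>j=1..M.
      (let pij = P i * Q i j; qj = (\<Sum>k=1..M. P k * Q k j)
       in if pij = 0 then 0 else pij * ln (Q i j / qj)))"

definition eps_IT :: "nat \<Rightarrow> (nat \<Rightarrow> real) set \<Rightarrow> (nat \<Rightarrow> nat \<Rightarrow> real) \<Rightarrow> real" where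
  "eps_IT M \<P> Q = (SUP P\<in>\<P>. mutual_info M P Q)"

definition eps_star_IT :: "nat \<Rightarrow> (nat \<Rightarrow> real) set \<Rightarrow> real \<Rightarrow> real" where
  "eps_star_IT M \<P> D = (INF Q\<in>valid_set M \<P> D. eps_IT M \<P> Q)"

definition xlnx :: "real \<Rightarrow> real" where
  "xlnx x = (if x = 0 then 0 else x * ln x)"

definition bin_entropy :: "real \<Rightarrow> real" where
  "bin_entropy D = - xlnx D - xlnx (1 - D)"

end

theory Submission
  imports Defs
begin


lemma dist_facts:
  assumes "is_dist M P" "mechanism M Q" "i \<in> {1..M}" "j \<in> {1..M}"
  shows "0 \<le> P i" "0 \<le> Q i j" "Q i j \<le> 1" "P i * Q i j \<le> (\<Sum>k=1..M. P k * Q k j)"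
proof -
  show p: "0 \<le> P i" using assms unfolding is_dist_def by auto
  show q: "0 \<le> Q i j" using assms unfolding mechanism_def by auto
  have "Q i j \<le> (\<Sum>j=1..M. Q i j)"
    by (rule member_le_sum) (use assms in \<open>auto simp: mechanism_def\<close>)
  then show "Q i j \<le> 1" using assms unfolding mechanism_def by auto
  show "P i * Q i j \<le> (\<Sum>k=1..M. P k * Q k j)"
    by (rule member_le_sum[where f="\<lambda>k. P k * Q k j"]) (use assms in \<open>auto simp: mechanism_def is_dist_def\<close>)
qed

lemma total_one:
  assumes "is_dist M P" "mechanism M Q"
  shows "(\<Sum>i=1..M. \<Sum>j=1..M. P i * Q i j) = 1"
proof -
  have "(\<Sum>i=1..M. \<Sum>j=1..M. P i * Q i j) = (\<Sum>i=1..M. P i * (\<Sum>j=1..M. Q i j))"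
    by (simp add: sum_distrib_left)
  also have "\<dots> = (\<Sum>i=1..M. P i)" using assms(2) unfolding mechanism_def by auto
  finally show ?thesis using assms(1) unfolding is_dist_def by auto
qed

lemma mi_eq: "mutual_info M P Q = (\<Sum>i=1..M. \<Sum>j=1..M.
   if P i * Q i j = 0 then 0 else P i * Q i j * ln (Q i j / (\<Sum>k=1..M. P k * Q k j)))"
  unfolding mutual_info_def Let_def by simp

lemma golden:
  assumes P: "is_dist M P" and Q: "mechanism M Q" and M: "M \<ge> 1"
  shows "mutual_info M P Q \<le> ln M + (\<Sum>i=1..M. P i * (\<Sum>j=1..M. xlnx (Q i j)))"
proof -
  define q where "q j = (\<Sum>k=1..M. P k * Q k j)" for j
  have Mp: "real M > 0" using M by auto
  have tw: "(if P i * Q i j = 0 then 0 else P i * Q i j * ln (Q i j / q j)) - P i * xlnx (Q i j) - P i * Q i j * ln M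
        \<le> P i * Q i j / (M * q j) - P i * Q i j" if ij: "i \<in> {1..M}" "j \<in> {1..M}" for i j
  proof (cases "P i * Q i j = 0")
    case True
    then have "P i * xlnx (Q i j) = 0" unfolding xlnx_def by auto
    then show ?thesis using True by (simp del: mult_eq_0_iff)
  next
    case False
    have p: "P i > 0" using dist_facts(1)[OF P Q ij] False by (cases "P i = 0") auto
    have qq: "Q i j > 0" using dist_facts(2)[OF P Q ij] False by (cases "Q i j = 0") auto
    have pij: "P i * Q i j > 0" using p qq by simp
    have qj: "q j > 0" using dist_facts(4)[OF P Q ij] pij unfolding q_def by linarith
    have "ln (1 / (M * q j)) \<le> 1 / (M * q j) - 1" by (rule ln_le_minus_one) (use Mp qj in simp)
    then have k: "P i * Q i j * ln (1 / (M * q j)) \<le> P i * Q i j * (1 / (M * q j) - 1)"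
      using pij by (simp add: mult_left_mono)
    have l: "ln (1 / (M * q j)) = - ln M - ln (q j)" using Mp qj by (simp add: ln_div ln_mult)
    have "(if P i * Q i j = 0 then 0 else P i * Q i j * ln (Q i j / q j)) - P i * xlnx (Q i j) - P i * Q i j * ln M
        = P i * Q i j * ln (1 / (M * q j))"
      using False qq qj unfolding l xlnx_def by (simp add: ln_div algebra_simps)
    also have "\<dots> \<le> P i * Q i j * (1 / (M * q j) - 1)" by (rule k)
    finally show ?thesis by (simp add: algebra_simps)
  qed
  have "(\<Sum>i=1..M. \<Sum>j=1..M. (if P i * Q i j = 0 then 0 else P i * Q i j * ln (Q i j / q j)) - P i * xlnx (Q i j) - P i * Q i j * ln M)
      \<le> (\<Sum>i=1..M. \<Sum>j=1..M. P i * Q i j / (M * q j) - P i * Q i j)"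
    by (intro sum_mono tw) auto
  also have "\<dots> = (\<Sum>j=1..M. \<Sum>i=1..M. P i * Q i j / (M * q j)) - 1"
    using total_one[OF P Q] sum.swap[of "\<lambda>i j. P i * Q i j / (M * q j)" "{1..M}" "{1..M}"] by (simp add: sum_subtractf)
  also have "\<dots> = (\<Sum>j=1..M. q j / (M * q j)) - 1"
    unfolding q_def by (simp add: sum_divide_distrib)
  also have "\<dots> \<le> (\<Sum>j=1..M. 1 / M) - 1"
  proof -
    have h: "q j / (M * q j) \<le> 1 / M" for j using Mp by (cases "q j = 0") auto
    have "(\<Sum>j=1..M. q j / (M * q j)) \<le> (\<Sum>j=1..M. 1 / M)" by (rule sum_mono) (rule h)
    then show ?thesis by linarith
  qed
  also have "\<dots> = 0" using Mp by simp
  finally have "(\<Sum>i=1..M. \<Sum>j=1..M. (if P i * Q i j = 0 then 0 else P i * Q i j * ln (Q i j / q j)) - P i * xlnx (Q i j) - P i * Q i j * ln M) \<le> 0" .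
  moreover have "(\<Sum>i=1..M. \<Sum>j=1..M. (if P i * Q i j = 0 then 0 else P i * Q i j * ln (Q i j / q j)) - P i * xlnx (Q i j) - P i * Q i j * ln M)
     = mutual_info M P Q - (\<Sum>i=1..M. P i * (\<Sum>j=1..M. xlnx (Q i j))) - (\<Sum>i=1..M. \<Sum>j=1..M. P i * Q i j) * ln M"
    unfolding mi_eq q_def by (simp add: sum_subtractf sum_distrib_left sum_distrib_right)
  ultimately show ?thesis using total_one[OF P Q] by simp
qed

lemma lower:
  assumes P: "is_dist M P" and Q: "mechanism M Q"
    and t0: "\<forall>i\<in>{1..M}. \<forall>j\<in>{1..M}. 0 \<le> t i j"
    and t1: "\<forall>j\<in>{1..M}. (\<Sum>i=1..M. t i j) \<le> 1"
    and tp: "\<forall>i\<in>{1..M}. \<forall>j\<in>{1..M}. P i * Q i j \<noteq> 0 \<longrightarrow> 0 < t i j"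
  shows "(\<Sum>i=1..M. \<Sum>j=1..M. if P i * Q i j = 0 then 0 else P i * Q i j * ln (t i j / P i)) \<le> mutual_info M P Q"
proof -
  define q where "q j = (\<Sum>k=1..M. P k * Q k j)" for j
  have tw: "(if P i * Q i j = 0 then 0 else P i * Q i j * ln (t i j / P i)) + (P i * Q i j - q j * t i j)
       \<le> (if P i * Q i j = 0 then 0 else P i * Q i j * ln (Q i j / q j))" if ij: "i \<in> {1..M}" "j \<in> {1..M}" for i j
  proof (cases "P i * Q i j = 0")
    case True
    have "0 \<le> q j" unfolding q_def
      by (rule sum_nonneg) (use dist_facts(1,2)[OF P Q _ ij(2)] in auto)
    then have "0 \<le> q j * t i j" using t0 ij by simp
    then show ?thesis using True by (simp del: mult_eq_0_iff)
  next
    case False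
    have p: "P i > 0" using dist_facts(1)[OF P Q ij] False by (cases "P i = 0") auto
    have qq: "Q i j > 0" using dist_facts(2)[OF P Q ij] False by (cases "Q i j = 0") auto
    have pij: "P i * Q i j > 0" using p qq by simp
    have qj: "q j > 0" using dist_facts(4)[OF P Q ij] pij unfolding q_def by linarith
    have tt: "t i j > 0" using tp ij False by auto
    have "ln (q j * t i j / (P i * Q i j)) \<le> q j * t i j / (P i * Q i j) - 1"
      by (rule ln_le_minus_one) (use qj tt pij in simp)
    then have k: "P i * Q i j * ln (q j * t i j / (P i * Q i j)) \<le> P i * Q i j * (q j * t i j / (P i * Q i j) - 1)"
      using pij by (simp add: mult_left_mono)
    have l: "ln (q j * t i j / (P i * Q i j)) = ln (q j) + ln (t i j) - ln (P i) - ln (Q i j)"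
      using qj tt p qq by (simp add: ln_div ln_mult)
    have e: "P i * Q i j * (q j * t i j / (P i * Q i j) - 1) = q j * t i j - P i * Q i j"
      using p qq by (simp add: field_simps)
    have l1: "ln (t i j / P i) = ln (t i j) - ln (P i)" using tt p by (simp add: ln_div)
    have l2: "ln (Q i j / q j) = ln (Q i j) - ln (q j)" using qq qj by (simp add: ln_div)
    have "P i * Q i j * (ln (q j) + ln (t i j) - ln (P i) - ln (Q i j)) \<le> q j * t i j - P i * Q i j"
      using k unfolding l e .
    then have "P i * Q i j * (ln (t i j) - ln (P i)) + (P i * Q i j - q j * t i j) \<le> P i * Q i j * (ln (Q i j) - ln (q j))"
      by (simp add: algebra_simps)
    then show ?thesis using False unfolding l1 l2 by simp
  qed
  have "(\<Sum>i=1..M. \<Sum>j=1..M. (if P i * Q i j = 0 then 0 else P i * Q i j * ln (t i j / P i)) + (P i * Q i j - q j * t i j))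
      \<le> (\<Sum>i=1..M. \<Sum>j=1..M. if P i * Q i j = 0 then 0 else P i * Q i j * ln (Q i j / q j))"
    by (intro sum_mono tw) auto
  also have "\<dots> = mutual_info M P Q" unfolding mi_eq q_def by simp
  finally have A: "(\<Sum>i=1..M. \<Sum>j=1..M. if P i * Q i j = 0 then 0 else P i * Q i j * ln (t i j / P i))
     + ((\<Sum>i=1..M. \<Sum>j=1..M. P i * Q i j) - (\<Sum>j=1..M. q j * (\<Sum>i=1..M. t i j))) \<le> mutual_info M P Q"
    using sum.swap[of "\<lambda>i j. q j * t i j" "{1..M}" "{1..M}"]
    by (simp add: sum.distrib sum_subtractf sum_distrib_left)
  have "(\<Sum>j=1..M. q j * (\<Sum>i=1..M. t i j)) \<le> (\<Sum>j=1..M. q j)"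
  proof (rule sum_mono)
    fix j assume j: "j \<in> {1..M}"
    have "0 \<le> q j" unfolding q_def
      by (rule sum_nonneg) (use dist_facts(1,2)[OF P Q _ j] in auto)
    then show "q j * (\<Sum>i=1..M. t i j) \<le> q j" using t1 j mult_left_mono[of _ 1 "q j"] by auto
  qed
  also have "\<dots> = (\<Sum>i=1..M. \<Sum>j=1..M. P i * Q i j)" unfolding q_def by (rule sum.swap)
  finally show ?thesis using A by linarith
qed

lemma mi_nonneg:
  assumes P: "is_dist M P" and Q: "mechanism M Q"
  shows "0 \<le> mutual_info M P Q"
proof -
  have "(\<Sum>i=1..M. \<Sum>j=1..M. if P i * Q i j = 0 then 0 else P i * Q i j * ln (P i / P i)) \<le> mutual_info M P Q"
    by (rule lower[OF P Q]) (use P in \<open>auto simp: is_dist_def\<close>)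
  moreover have "(\<Sum>i=1..M. \<Sum>j=1..M. if P i * Q i j = 0 then 0 else P i * Q i j * ln (P i / P i)) = 0"
    by (intro sum.neutral ballI) auto
  ultimately show ?thesis by simp
qed

lemma mi_le_lnM:
  assumes P: "is_dist M P" and Q: "mechanism M Q" and M: "M \<ge> 1"
  shows "mutual_info M P Q \<le> ln M"
proof -
  have "P i * (\<Sum>j=1..M. xlnx (Q i j)) \<le> 0" if i: "i \<in> {1..M}" for i
  proof -
    have "xlnx (Q i j) \<le> 0" if j: "j \<in> {1..M}" for j
      using dist_facts(2,3)[OF P Q i j] unfolding xlnx_def
      by (auto intro!: mult_nonneg_nonpos)
    then have "(\<Sum>j=1..M. xlnx (Q i j)) \<le> 0" by (intro sum_nonpos) auto
    then show ?thesis using dist_facts(1)[OF P Q i i] by (simp add: mult_nonneg_nonpos)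
  qed
  then have "(\<Sum>i=1..M. P i * (\<Sum>j=1..M. xlnx (Q i j))) \<le> 0" by (intro sum_nonpos) auto
  then show ?thesis using golden[OF P Q M] by linarith
qed

lemma convex_comb:
  fixes n :: nat and w :: "nat \<Rightarrow> real" and v :: "nat \<Rightarrow> nat \<Rightarrow> real"
  assumes cv: "convex_fset S"
  shows "(\<forall>k<n. 0 \<le> w k \<and> v k \<in> S) \<Longrightarrow> (\<Sum>k<n. w k) = 1 \<Longrightarrow> (\<lambda>i. \<Sum>k<n. w k * v k i) \<in> S"
proof (induction n arbitrary: w)
  case 0
  then show ?case by simp
next
  case (Suc n)
  define s where "s = (\<Sum>k<n. w k)"
  have s1: "s + w n = 1" using Suc.prems(2) unfolding s_def by simp
  have s0: "0 \<le> s" unfolding s_def by (rule sum_nonneg) (use Suc.prems(1) in auto)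
  have vn: "v n \<in> S" "0 \<le> w n" using Suc.prems(1) by auto
  show ?case
  proof (cases "s = 0")
    case True
    have "\<forall>k\<in>{..<n}. w k = 0"
      using True Suc.prems(1) unfolding s_def by (subst sum_nonneg_eq_0_iff[symmetric]) auto
    then have "(\<lambda>i. \<Sum>k<Suc n. w k * v k i) = v n" using s1 True by (auto intro!: ext)
    then show ?thesis using vn by simp
  next
    case False
    then have sp: "s > 0" using s0 by simp
    have "(\<lambda>i. \<Sum>k<n. (w k / s) * v k i) \<in> S"
    proof (rule Suc.IH)
      show "\<forall>k<n. 0 \<le> w k / s \<and> v k \<in> S" using Suc.prems(1) sp by auto
      show "(\<Sum>k<n. w k / s) = 1" using sp unfolding s_def[symmetric] sum_divide_distrib[symmetric] by simp
    qed
    then have "(\<lambda>i. s * (\<Sum>k<n. (w k / s) * v k i) + (1 - s) * v n i) \<in> S"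
      using cv vn s0 s1 unfolding convex_fset_def by auto
    moreover have "(\<lambda>i. s * (\<Sum>k<n. (w k / s) * v k i) + (1 - s) * v n i) = (\<lambda>i. \<Sum>k<Suc n. w k * v k i)"
    proof
      fix i
      have "s * (\<Sum>k<n. (w k / s) * v k i) = (\<Sum>k<n. w k * v k i)"
        using sp by (simp add: sum_distrib_left)
      then show "s * (\<Sum>k<n. (w k / s) * v k i) + (1 - s) * v n i = (\<Sum>k<Suc n. w k * v k i)"
        using s1 by simp
    qed
    ultimately show ?thesis by simp
  qed
qed

lemma uniform_in:
  assumes "convex_fset S" "class_I M S"
  shows "uniform_dist M \<in> S"
proof -
  obtain n :: nat and w :: "nat \<Rightarrow> real" and v :: "nat \<Rightarrow> nat \<Rightarrow> real" where h: "\<forall>k<n. 0 \<le> w k \<and> v k \<in> S" "(\<Sum>k<n. w k) = 1"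
     "uniform_dist M = (\<lambda>i. \<Sum>k<n. w k * v k i)"
    using assms(2) unfolding class_I_def in_convex_hull_def by blast
  show ?thesis unfolding h(3) by (rule convex_comb[OF assms(1) h(1,2)])
qed

lemma uniform_is_dist:
  assumes "M \<ge> 1" shows "is_dist M (uniform_dist M)"
  using assms unfolding is_dist_def uniform_dist_def by auto


lemma assemble:
  assumes Qs: "Qs \<in> valid_set M PP D"
    and up: "\<forall>P\<in>PP. mutual_info M P Qs \<le> f"
    and lo: "\<forall>Q\<in>valid_set M PP D. f \<le> mutual_info M U Q"
    and U: "U \<in> PP" and dists: "\<forall>P\<in>PP. is_dist M P" and M: "M \<ge> 1"
  shows "eps_star_IT M PP D = f"
proof -
  have ne: "PP \<noteq> {}" using U by auto
  have epsQ: "f \<le> eps_IT M PP Q" if Q: "Q \<in> valid_set M PP D" for Q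
  proof -
    have mQ: "mechanism M Q" using Q unfolding valid_set_def valid_mech_def by auto
    have "bdd_above ((\<lambda>P. mutual_info M P Q) ` PP)"
      using mi_le_lnM[OF _ mQ M] dists by (intro bdd_aboveI2) auto
    then have "mutual_info M U Q \<le> eps_IT M PP Q"
      unfolding eps_IT_def by (rule cSUP_upper[OF U])
    then show ?thesis using lo Q by force
  qed
  have epsQs: "eps_IT M PP Qs \<le> f"
    unfolding eps_IT_def using ne up by (intro cSUP_least) auto
  have "bdd_below ((\<lambda>Q. eps_IT M PP Q) ` valid_set M PP D)"
    using epsQ by (intro bdd_belowI2) auto
  then have "eps_star_IT M PP D \<le> eps_IT M PP Qs"
    unfolding eps_star_IT_def by (rule cINF_lower[OF _ Qs])
  moreover have "f \<le> eps_star_IT M PP D"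
    unfolding eps_star_IT_def using Qs epsQ by (intro cINF_greatest) auto
  ultimately show ?thesis using epsQs by linarith
qed

definition Qsym :: "nat \<Rightarrow> real \<Rightarrow> nat \<Rightarrow> nat \<Rightarrow> real" where
  "Qsym M d i j = (if i = j then 1 - d else d / (real M - 1))"

lemma sum_sym1:
  assumes "i \<in> {1..M}"
  shows "(\<Sum>j=1..M. if i = j then a else b) = a + (real M - 1) * (b::real)"
proof -
  have "(\<Sum>j=1..M. if i = j then a else b) = a + (\<Sum>j\<in>{1..M}-{i}. if i = j then a else b)"
    using assms by (subst sum.remove[of _ i]) auto
  also have "(\<Sum>j\<in>{1..M}-{i}. if i = j then a else b) = (\<Sum>j\<in>{1..M}-{i}. b)"
    by (rule sum.cong) auto
  also have "\<dots> = (real M - 1) * b" using assms by (simp add: of_nat_diff)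
  finally show ?thesis .
qed

lemma sum_sym2:
  assumes "j \<in> {1..M}"
  shows "(\<Sum>i=1..M. if i = j then a else b) = a + (real M - 1) * (b::real)"
proof -
  have "(\<Sum>i=1..M. if i = j then a else b) = (\<Sum>i=1..M. if j = i then a else b)"
    by (rule sum.cong) auto
  then show ?thesis using sum_sym1[OF assms, of a b] by simp
qed

lemma Qsym_mech:
  assumes "M \<ge> 2" "0 \<le> d" "d \<le> 1"
  shows "mechanism M (Qsym M d)"
proof -
  have M1: "real M - 1 > 0" using assms by simp
  show ?thesis unfolding mechanism_def Qsym_def
  proof (rule ballI, rule conjI)
    fix i assume i: "i \<in> {1..M}"
    show "\<forall>j\<in>{1..M}. 0 \<le> (if i = j then 1 - d else d / (real M - 1))" using assms M1 by auto
    have "(real M - 1) * (d / (real M - 1)) = d" using M1 by simp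
    then show "(\<Sum>j=1..M. if i = j then 1 - d else d / (real M - 1)) = 1" using sum_sym1[OF i, of "1 - d" "d / (real M - 1)"] by simp
  qed
qed

lemma Qsym_valid:
  assumes "M \<ge> 2" "0 \<le> d" "d \<le> 1" "d \<le> D" "\<forall>P\<in>PP. is_dist M P"
  shows "Qsym M d \<in> valid_set M PP D"
proof -
  have "(\<Sum>i=1..M. P i * diag_dist (Qsym M d) i) = d" if "is_dist M P" for P
  proof -
    have "(\<Sum>i=1..M. P i * diag_dist (Qsym M d) i) = (\<Sum>i=1..M. P i) * d"
      unfolding diag_dist_def Qsym_def by (simp add: sum_distrib_right)
    then show ?thesis using that unfolding is_dist_def by simp
  qed
  then have "\<forall>P\<in>PP. (\<Sum>i=1..M. P i * diag_dist (Qsym M d) i) \<le> D" using assms(4,5) by simp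
  then show ?thesis using Qsym_mech[OF assms(1-3)]
    unfolding valid_set_def valid_mech_def by blast
qed

lemma Qsym_up:
  assumes "M \<ge> 2" "0 \<le> d" "d \<le> 1" "is_dist M P"
  shows "mutual_info M P (Qsym M d) \<le> ln M + xlnx (1 - d) + (real M - 1) * xlnx (d / (real M - 1))"
proof -
  have r: "(\<Sum>j=1..M. xlnx (Qsym M d i j)) = xlnx (1 - d) + (real M - 1) * xlnx (d / (real M - 1))"
    if "i \<in> {1..M}" for i
  proof -
    have "(\<Sum>j=1..M. xlnx (Qsym M d i j)) = (\<Sum>j=1..M. if i = j then xlnx (1 - d) else xlnx (d / (real M - 1)))"
      unfolding Qsym_def by (rule sum.cong) auto
    then show ?thesis using sum_sym1[OF that] by simp
  qed
  have "(\<Sum>i=1..M. P i * (\<Sum>j=1..M. xlnx (Qsym M d i j))) = (\<Sum>i=1..M. P i * (xlnx (1 - d) + (real M - 1) * xlnx (d / (real M - 1))))"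
  proof (rule sum.cong)
    fix i assume "i \<in> {1..M}"
    from r[OF this] show "P i * (\<Sum>j=1..M. xlnx (Qsym M d i j)) = P i * (xlnx (1 - d) + (real M - 1) * xlnx (d / (real M - 1)))"
      by simp
  qed simp
  also have "\<dots> = (\<Sum>i=1..M. P i) * (xlnx (1 - d) + (real M - 1) * xlnx (d / (real M - 1)))"
    by (simp add: sum_distrib_right)
  also have "\<dots> = xlnx (1 - d) + (real M - 1) * xlnx (d / (real M - 1))"
    using assms(4) unfolding is_dist_def by simp
  finally show ?thesis using golden[OF assms(4) Qsym_mech[OF assms(1-3)]] assms(1) by simp
qed



lemma lower_unif:
  assumes M2: "M \<ge> 2" and D0: "0 \<le> D" and DM: "D < (real M - 1) / real M"
    and Q: "mechanism M Q" and val: "(\<Sum>i=1..M. uniform_dist M i * diag_dist Q i) \<le> D"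
  shows "ln M - bin_entropy D - D * ln (real M - 1) \<le> mutual_info M (uniform_dist M) Q"
proof -
  define U where "U = uniform_dist M"
  define t where "t = Qsym M D"
  define d' where "d' = (\<Sum>i=1..M. (1 / real M) * (1 - Q i i))"
  define A where "A = ln ((1 - D) * real M)"
  define B where "B = ln (D * real M / (real M - 1))"
  have Mp: "real M > 0" using M2 by simp
  have M1: "real M - 1 > 0" using M2 by simp
  have U1: "is_dist M U" unfolding U_def by (rule uniform_is_dist) (use M2 in simp)
  have DM': "D * real M < real M - 1" using DM Mp by (simp add: field_simps)
  have D1: "D < 1"
  proof (rule ccontr)
    assume "\<not> D < 1"
    then have "1 * real M \<le> D * real M" using Mp by (intro mult_right_mono) auto
    then show False using DM' by simp
  qed
  have Ui: "U i = 1 / real M" if "i \<in> {1..M}" for i using that unfolding U_def uniform_dist_def by simp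
  have dle: "d' \<le> D"
  proof -
    have "(\<Sum>i=1..M. uniform_dist M i * diag_dist Q i) = d'"
      unfolding d'_def diag_dist_def by (rule sum.cong) (auto simp: uniform_dist_def)
    then show ?thesis using val by simp
  qed
  have dge: "0 \<le> d'" unfolding d'_def
    by (rule sum_nonneg) (use dist_facts(3)[OF U1 Q] Mp in auto)
  have offsum: "(\<Sum>j\<in>{1..M}-{i}. Q i j) = 1 - Q i i" if i: "i \<in> {1..M}" for i
  proof -
    have "(\<Sum>j=1..M. Q i j) = Q i i + (\<Sum>j\<in>{1..M}-{i}. Q i j)" using i by (subst sum.remove[of _ i]) auto
    then show ?thesis using Q i unfolding mechanism_def by auto
  qed
  have zero: "Q i j = 0" if "D = 0" "i \<in> {1..M}" "j \<in> {1..M}" "i \<noteq> j" for i j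
  proof -
    have "d' = 0" using dle dge that(1) by simp
    then have "\<forall>i\<in>{1..M}. (1 / real M) * (1 - Q i i) = 0" unfolding d'_def
      by (subst sum_nonneg_eq_0_iff[symmetric]) (use dist_facts(3)[OF U1 Q] Mp in auto)
    then have "Q i i = 1" using that(2) Mp by auto
    then have "(\<Sum>j\<in>{1..M}-{i}. Q i j) = 0" using offsum[OF that(2)] by simp
    then have "\<forall>j\<in>{1..M}-{i}. Q i j = 0"
      by (subst sum_nonneg_eq_0_iff[symmetric]) (use dist_facts(2)[OF U1 Q that(2)] in auto)
    then show ?thesis using that by auto
  qed
  have low: "(\<Sum>i=1..M. \<Sum>j=1..M. if U i * Q i j = 0 then 0 else U i * Q i j * ln (t i j / U i)) \<le> mutual_info M U Q"
  proof (rule lower[OF U1 Q])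
    show "\<forall>i\<in>{1..M}. \<forall>j\<in>{1..M}. 0 \<le> t i j" unfolding t_def Qsym_def using D0 D1 M1 by auto
    show "\<forall>j\<in>{1..M}. (\<Sum>i=1..M. t i j) \<le> 1"
    proof
      fix j assume j: "j \<in> {1..M}"
      have "(real M - 1) * (D / (real M - 1)) = D" using M1 by simp
      then show "(\<Sum>i=1..M. t i j) \<le> 1" unfolding t_def Qsym_def using sum_sym2[OF j, of "1 - D" "D / (real M - 1)"] by simp
    qed
    show "\<forall>i\<in>{1..M}. \<forall>j\<in>{1..M}. U i * Q i j \<noteq> 0 \<longrightarrow> 0 < t i j"
    proof (intro ballI impI)
      fix i j assume ij: "i \<in> {1..M}" "j \<in> {1..M}" and nz: "U i * Q i j \<noteq> 0"
      show "0 < t i j"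
      proof (cases "i = j")
        case True then show ?thesis unfolding t_def Qsym_def using D1 by simp
      next
        case False
        have "D \<noteq> 0" using zero[OF _ ij False] nz by auto
        then show ?thesis unfolding t_def Qsym_def using False D0 M1 by simp
      qed
    qed
  qed
  have trm: "(if U i * Q i j = 0 then 0 else U i * Q i j * ln (t i j / U i)) = (1 / real M) * (Q i j * (if i = j then A else B))"
    if ij: "i \<in> {1..M}" "j \<in> {1..M}" for i j
  proof (cases "Q i j = 0")
    case True then show ?thesis by simp
  next
    case False
    have "t i j / U i = (if i = j then (1 - D) * real M else D * real M / (real M - 1))"
      unfolding t_def Qsym_def Ui[OF ij(1)] by simp
    then show ?thesis using False Mp unfolding Ui[OF ij(1)] A_def B_def by simp
  qed
  have row: "(\<Sum>j=1..M. (1 / real M) * (Q i j * (if i = j then A else B))) = (1 / real M) * A - (A - B) * ((1 / real M) * (1 - Q i i))"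
    if i: "i \<in> {1..M}" for i
  proof -
    have "(\<Sum>j=1..M. (1 / real M) * (Q i j * (if i = j then A else B)))
        = (1 / real M) * (Q i i * A) + (\<Sum>j\<in>{1..M}-{i}. (1 / real M) * (Q i j * (if i = j then A else B)))"
      using i by (subst sum.remove[of _ i]) auto
    also have "(\<Sum>j\<in>{1..M}-{i}. (1 / real M) * (Q i j * (if i = j then A else B))) = (\<Sum>j\<in>{1..M}-{i}. (1 / real M) * B * Q i j)"
      by (rule sum.cong) auto
    also have "\<dots> = (1 / real M) * B * (\<Sum>j\<in>{1..M}-{i}. Q i j)" by (rule sum_distrib_left[symmetric])
    also have "\<dots> = (1 / real M) * B * (1 - Q i i)" using offsum[OF i] by simp
    also have "(1 / real M) * (Q i i * A) + (1 / real M) * B * (1 - Q i i) = (1 / real M) * A - (A - B) * ((1 / real M) * (1 - Q i i))"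
      using Mp by (simp add: field_simps)
    finally show ?thesis .
  qed
  have "(\<Sum>i=1..M. \<Sum>j=1..M. if U i * Q i j = 0 then 0 else U i * Q i j * ln (t i j / U i))
      = (\<Sum>i=1..M. (1 / real M) * A - (A - B) * ((1 / real M) * (1 - Q i i)))"
  proof (rule sum.cong[OF refl])
    fix i assume i: "i \<in> {1..M}"
    have "(\<Sum>j=1..M. if U i * Q i j = 0 then 0 else U i * Q i j * ln (t i j / U i))
        = (\<Sum>j=1..M. (1 / real M) * (Q i j * (if i = j then A else B)))"
      by (rule sum.cong[OF refl]) (rule trm[OF i])
    then show "(\<Sum>j=1..M. if U i * Q i j = 0 then 0 else U i * Q i j * ln (t i j / U i))
        = (1 / real M) * A - (A - B) * ((1 / real M) * (1 - Q i i))" using row[OF i] by simp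
  qed
  also have "\<dots> = (\<Sum>i=1..M. (1 / real M) * A) - (A - B) * d'"
    unfolding d'_def by (simp only: sum_subtractf sum_distrib_left)
  also have "(\<Sum>i=1..M. (1 / real M) * A) = A" using Mp by simp
  finally have low2: "A - (A - B) * d' \<le> mutual_info M U Q" using low by simp
  show ?thesis
  proof (cases "D = 0")
    case True
    then have "d' = 0" using dle dge by simp
    moreover have "ln M - bin_entropy D - D * ln (real M - 1) = A"
      using True unfolding A_def bin_entropy_def xlnx_def by simp
    ultimately show ?thesis using low2 unfolding U_def by simp
  next
    case False
    then have Dp: "D > 0" using D0 by simp
    have lnA: "A = ln (1 - D) + ln M" unfolding A_def using D1 Mp by (simp add: ln_mult)
    have lnB: "B = ln D + ln M - ln (real M - 1)" unfolding B_def using Dp Mp M1 by (simp add: ln_mult ln_div)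
    have f: "ln M - bin_entropy D - D * ln (real M - 1) = A - (A - B) * D"
      unfolding lnA lnB bin_entropy_def xlnx_def using Dp D1 by (simp add: algebra_simps)
    have "D * real M / (real M - 1) < (1 - D) * real M"
    proof -
      have "D < (1 - D) * (real M - 1)" using DM' by (simp add: algebra_simps)
      then have "D * real M < (1 - D) * (real M - 1) * real M" using Mp by simp
      then show ?thesis using M1 by (simp add: field_simps)
    qed
    moreover have "D * real M / (real M - 1) > 0" using Dp Mp M1 by simp
    moreover have "(1 - D) * real M > 0" using D1 Mp by simp
    ultimately have "B < A" unfolding A_def B_def by simp
    then have "(A - B) * d' \<le> (A - B) * D" using dle by (simp add: mult_left_mono)
    then show ?thesis using low2 f unfolding U_def by linarith
  qed
qed



theorem lemma3:
  fixes M :: nat and \<P> :: "(nat \<Rightarrow> real) set" and D :: real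
  assumes "M \<ge> 2" and "source_set M \<P>" and "convex_fset \<P>" and "class_I M \<P>"
    and "0 \<le> D" and "D \<le> 1"
  shows "eps_star_IT M \<P> D =
    (if D < (real M - 1) / real M
     then ln (real M) - bin_entropy D - D * ln (real M - 1)
     else 0)"
proof -
  have M1: "M \<ge> 1" using assms(1) by simp
  have Mp: "real M > 0" using assms(1) by simp
  have Mm: "real M - 1 > 0" using assms(1) by simp
  have dists: "\<forall>P\<in>\<P>. is_dist M P" using assms(2) unfolding source_set_def by auto
  have U: "uniform_dist M \<in> \<P>" by (rule uniform_in[OF assms(3,4)])
  show ?thesis
  proof (cases "D < (real M - 1) / real M")
    case True
    have DM': "D * real M < real M - 1" using True Mp by (simp add: field_simps)
    have D1: "D \<le> 1" by fact
    have xl: "(real M - 1) * xlnx (D / (real M - 1)) = xlnx D - D * ln (real M - 1)"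
    proof (cases "D = 0")
      case True then show ?thesis unfolding xlnx_def by simp
    next
      case False
      then have "D > 0" using assms(5) by simp
      then show ?thesis unfolding xlnx_def using Mm False by (simp add: ln_div right_diff_distrib)
    qed
    have "eps_star_IT M \<P> D = ln (real M) - bin_entropy D - D * ln (real M - 1)"
    proof (rule assemble[OF Qsym_valid[OF assms(1,5,6) order.refl dists] _ _ U dists M1])
      show "\<forall>P\<in>\<P>. mutual_info M P (Qsym M D) \<le> ln (real M) - bin_entropy D - D * ln (real M - 1)"
        using Qsym_up[OF assms(1,5,6)] dists xl unfolding bin_entropy_def by fastforce
      show "\<forall>Q\<in>valid_set M \<P> D. ln (real M) - bin_entropy D - D * ln (real M - 1) \<le> mutual_info M (uniform_dist M) Q"
      proof
        fix Q assume "Q \<in> valid_set M \<P> D"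
        then have "mechanism M Q" "(\<Sum>i=1..M. uniform_dist M i * diag_dist Q i) \<le> D"
          using U unfolding valid_set_def valid_mech_def by auto
        then show "ln (real M) - bin_entropy D - D * ln (real M - 1) \<le> mutual_info M (uniform_dist M) Q"
          using lower_unif[OF assms(1,5) True] by blast
      qed
    qed
    then show ?thesis using True by simp
  next
    case False
    define d where "d = (real M - 1) / real M"
    have d0: "0 \<le> d" "d \<le> 1" "d \<le> D" using False Mp Mm unfolding d_def by auto
    have e1: "1 - d = 1 / real M" unfolding d_def using Mp by (simp add: field_simps)
    have e2: "d / (real M - 1) = 1 / real M" unfolding d_def using Mp Mm by (simp add: field_simps)
    have z: "ln M + xlnx (1 - d) + (real M - 1) * xlnx (d / (real M - 1)) = 0"
    proof -
      have "xlnx (1 / real M) = - (1 / real M) * ln M" unfolding xlnx_def using Mp by (simp add: ln_div)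
      then have x: "real M * xlnx (1 / real M) = - ln M" using Mp by simp
      have "xlnx (1 - d) + (real M - 1) * xlnx (d / (real M - 1)) = real M * xlnx (1 / real M)"
        unfolding e1 e2 by (simp add: algebra_simps)
      then show ?thesis using x by simp
    qed
    have "eps_star_IT M \<P> D = 0"
    proof (rule assemble[OF Qsym_valid[OF assms(1) d0 dists] _ _ U dists M1])
      show "\<forall>P\<in>\<P>. mutual_info M P (Qsym M d) \<le> 0"
        using Qsym_up[OF assms(1) d0(1,2)] dists z by fastforce
      show "\<forall>Q\<in>valid_set M \<P> D. 0 \<le> mutual_info M (uniform_dist M) Q"
        using mi_nonneg[OF uniform_is_dist[OF M1]] unfolding valid_set_def valid_mech_def by auto
    qed
    then show ?thesis using False by simp
  qed
qed


end
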